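(* Let $\rho,\sigma\in\mathrm{Rect}^\ast(n)$ and let $\lambda\mapsto\lambda^\ast$ denote conjugation of partitions. Then: (1) $A(\rho^\ast)=A(\rho)^\ast$ and $s(\rho^\ast)=s(\rho)^\ast$; (2) $d_{\mathrm{sup}}(\rho,\sigma)=d_{\mathrm{sup}}(\rho^\ast,\sigma^\ast)$; (3) conjugation maps the support geodesics from $\rho$ to $\sigma$ bijectively onto the support geodesics from $\rho^\ast$ to $\sigma^\ast$, and hence $\mathrm{Corr}_{\mathrm{all}}(\rho^\ast,\sigma^\ast)=\mathrm{Corr}_{\mathrm{all}}(\rho,\sigma)^\ast$.
   Context: The partition graph $G_n$ has as vertices the integer partitions of $n$; two partitions are adjacent if one is obtained from the other by a single elementary unit transfer followed by reordering: decrease one part by $1$ and either increase a different part by $1$ or create a new part equal to $1$, then delete a part that became $0$ and sort in nonincreasing order (the result being different from the original). Conjugation transposes the Ferrers diagram; it is applied elementwise to sets, edges and paths. $\mathrm{Rect}^\ast(n)=\{(a^b):ab=n,\ a,b\ge2\}$, where $(a^b)$ has $b$ parts equal to $a$. For $\rho=(a^b)\in\mathrm{Rect}^\ast(n)$ let $\alpha(\rho)=(a+1,a^{\,b-2},a-1)$ (equal to $(a+1,a-1)$ if $b=2$) and $\beta(\rho)=(a^{\,b-1},a-1,1)$; the attachment pair is $A(\rho)=\{\alpha(\rho),\beta(\rho)\}$ and the support edge is $s(\rho)=\alpha(\rho)\beta(\rho)$. The support distance $d_{\mathrm{sup}}(\rho,\sigma)\in\mathbb N_0\cup\{\infty\}$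 is the minimum of the graph distances in $G_n\setminus\mathrm{Rect}^\ast(n)$ between a vertex of $A(\rho)$ and a vertex of $A(\sigma)$, and $\infty$ if no path in $G_n\setminus\mathrm{Rect}^\ast(n)$ joins them. When $d_{\mathrm{sup}}(\rho,\sigma)<\infty$, a support geodesic from $\rho$ to $\sigma$ is a shortest path in $G_n\setminus\mathrm{Rect}^\ast(n)$ joining some vertex of $A(\rho)$ to some vertex of $A(\sigma)$, i.e. of length $d_{\mathrm{sup}}(\rho,\sigma)$; $\mathrm{Corr}_{\mathrm{all}}(\rho,\sigma)$ is the union of all support geodesics from $\rho$ to $\sigma$, and $\mathrm{Corr}_{\mathrm{all}}(\rho,\sigma)=\varnothing$ if $d_{\mathrm{sup}}(\rho,\sigma)=\infty$. *)

theory Defs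
  imports Main "HOL-Library.Extended_Nat" "HOL-Library.Uprod"
begin

definition is_partition :: "nat \<Rightarrow> nat list \<Rightarrow> bool" where
  "is_partition n lam \<longleftrightarrow> sorted_wrt (\<ge>) lam \<and> 0 \<notin> set lam \<and> sum_list lam = n"

definition Partitions :: "nat \<Rightarrow> nat list set" where
  "Partitions n = {lam. is_partition n lam}"

definition normalize :: "nat list \<Rightarrow> nat list" where
  "normalize xs = rev (sort (filter (\<lambda>x. x \<noteq> 0) xs))"

definition unit_move :: "nat list \<Rightarrow> nat list \<Rightarrow> bool" where
  "unit_move mu nu \<longleftrightarrow> nu \<noteq> mu \<and>
     ((\<exists>i j. i < length mu \<and> j < length mu \<and> i \<noteq> j \<and> 1 \<le> mu ! i \<and>
              nu = normalize ((mu[i := mu ! i - 1])[j := mu ! j + 1])) \<or>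
      (\<exists>i. i < length mu \<and> 1 \<le> mu ! i \<and> nu = normalize (mu[i := mu ! i - 1] @ [1])))"

definition adj :: "nat \<Rightarrow> nat list \<Rightarrow> nat list \<Rightarrow> bool" where
  "adj n mu nu \<longleftrightarrow> mu \<in> Partitions n \<and> nu \<in> Partitions n \<and> (unit_move mu nu \<or> unit_move nu mu)"

definition Rect :: "nat \<Rightarrow> nat list set" where
  "Rect n = {replicate b a | a b. a * b = n \<and> 2 \<le> a \<and> 2 \<le> b}"

definition conjugate :: "nat list \<Rightarrow> nat list" where
  "conjugate lam = map (\<lambda>j. length (filter (\<lambda>x. Suc j \<le> x) lam)) [0..<foldr max lam 0]"

definition alpha :: "nat list \<Rightarrow> nat list" where
  "alpha rho = (let a = hd rho; b = length rho in [a + 1] @ replicate (b - 2) a @ [a - 1])"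

definition beta :: "nat list \<Rightarrow> nat list" where
  "beta rho = (let a = hd rho; b = length rho in replicate (b - 1) a @ [a - 1, 1])"

definition attach :: "nat list \<Rightarrow> nat list set" where
  "attach rho = {alpha rho, beta rho}"

definition support_edge :: "nat list \<Rightarrow> nat list uprod" where
  "support_edge rho = Upair (alpha rho) (beta rho)"

definition walk :: "nat \<Rightarrow> nat list list \<Rightarrow> bool" where
  "walk n p \<longleftrightarrow> p \<noteq> [] \<and> set p \<subseteq> Partitions n - Rect n \<and>
     (\<forall>i. Suc i < length p \<longrightarrow> adj n (p ! i) (p ! Suc i))"

definition support_walks :: "nat \<Rightarrow> nat list \<Rightarrow> nat list \<Rightarrow> nat list list set" where
  "support_walks n rho sigma = {p. walk n p \<and> hd p \<in> attach rho \<and> last p \<in> attach sigma}"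

definition d_sup :: "nat \<Rightarrow> nat list \<Rightarrow> nat list \<Rightarrow> enat" where
  "d_sup n rho sigma = (INF p \<in> support_walks n rho sigma. enat (length p - 1))"

definition support_geodesics :: "nat \<Rightarrow> nat list \<Rightarrow> nat list \<Rightarrow> nat list list set" where
  "support_geodesics n rho sigma =
     {p \<in> support_walks n rho sigma. enat (length p - 1) = d_sup n rho sigma}"

definition path_edges :: "nat list list \<Rightarrow> nat list uprod set" where
  "path_edges p = {Upair (p ! i) (p ! Suc i) | i. Suc i < length p}"

definition Corr_all :: "nat \<Rightarrow> nat list \<Rightarrow> nat list \<Rightarrow> nat list set \<times> nat list uprod set" where
  "Corr_all n rho sigma =
     ((\<Union>p \<in> support_geodesics n rho sigma. set p),
      (\<Union>p \<in> support_geodesics n rho sigma. path_edges p))"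

definition conj_graph :: "nat list set \<times> nat list uprod set \<Rightarrow> nat list set \<times> nat list uprod set" where
  "conj_graph G = (conjugate ` fst G, map_uprod conjugate ` snd G)"

end

theory Submission imports Defs "HOL-Library.Multiset" begin

definition cntge :: "nat list \<Rightarrow> nat \<Rightarrow> nat" where
  "cntge xs t = length (filter (\<lambda>x. t \<le> x) xs)"

definition C :: "nat list \<Rightarrow> nat \<Rightarrow> nat" where
  "C xs k = cntge xs (Suc k)"

definition Dg :: "nat list \<Rightarrow> (nat \<times> nat) set" where
  "Dg xs = {(i,k). i < C xs k}"

definition mx :: "nat list \<Rightarrow> nat" where "mx xs = foldr max xs 0"

lemma conj_alt: "conjugate lam = map (C lam) [0..<mx lam]"
  unfolding conjugate_def C_def cntge_def mx_def by simp

lemma cntge_Nil[simp]: "cntge [] t = 0" by (simp add: cntge_def)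
lemma cntge_Cons[simp]: "cntge (x#xs) t = (if t \<le> x then Suc (cntge xs t) else cntge xs t)"
  by (simp add: cntge_def)
lemma cntge_append[simp]: "cntge (xs@ys) t = cntge xs t + cntge ys t"
  by (simp add: cntge_def)

lemma cntge_anti: "t \<le> t' \<Longrightarrow> cntge xs t' \<le> cntge xs t"
  by (induction xs) auto

lemma cntge_split: "cntge xs t = length (filter (\<lambda>x. x = t) xs) + cntge xs (Suc t)"
  by (induction xs) auto

lemma cntge_update: "i < length xs \<Longrightarrow>
   cntge (xs[i:=v]) t + (if t \<le> xs!i then 1 else 0) = cntge xs t + (if t \<le> v then 1 else 0)"
proof (induction xs arbitrary: i)
  case Nil thus ?case by simp
next
  case (Cons x xs) thus ?case by (cases i) auto
qed

lemma key: "sorted_wrt (\<ge>) xs \<Longrightarrow> i < cntge xs t \<longleftrightarrow> i < length xs \<and> t \<le> xs!i"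
proof (induction xs arbitrary: i)
  case Nil thus ?case by simp
next
  case (Cons x xs)
  have s: "sorted_wrt (\<ge>) xs" and ge: "\<forall>y\<in>set xs. y \<le> x" using Cons.prems by auto
  show ?case
  proof (cases "t \<le> x")
    case True
    show ?thesis
    proof (cases i)
      case 0 thus ?thesis using True by simp
    next
      case (Suc i')
      thus ?thesis using True Cons.IH[OF s, of i'] by simp
    qed
  next
    case False
    hence z: "cntge xs t = 0" using ge unfolding cntge_def by (auto simp: filter_empty_conv)
    have "\<not> (i < length (x#xs) \<and> t \<le> (x#xs)!i)"
    proof (cases i)
      case 0 thus ?thesis using False by simp
    next
      case (Suc i')
      show ?thesis
      proof
        assume h: "i < length (x#xs) \<and> t \<le> (x#xs)!i"
        hence "t \<le> xs!i'" "i' < length xs" using Suc by auto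
        thus False using ge False by (meson le_trans nth_mem)
      qed
    qed
    thus ?thesis using False z by simp
  qed
qed

lemma mx_ge: "x \<in> set xs \<Longrightarrow> x \<le> mx xs"
  unfolding mx_def by (induction xs) auto

lemma mx_ex: "k < mx xs \<Longrightarrow> \<exists>x\<in>set xs. k < x"
  unfolding mx_def by (induction xs) (auto simp: max_def split: if_splits)

lemma C_pos_mx: "0 < C xs k \<Longrightarrow> k < mx xs"
proof -
  assume "0 < C xs k"
  then obtain x where "x \<in> set xs" "Suc k \<le> x" unfolding C_def cntge_def
    by (metis filter_empty_conv length_greater_0_conv)
  thus ?thesis using mx_ge by fastforce
qed

lemma conj_sorted: "sorted_wrt (\<ge>) (conjugate lam)"
  unfolding conj_alt C_def sorted_wrt_map
  by (rule sorted_wrt_mono_rel[OF _ sorted_wrt_upt]) (auto intro: cntge_anti)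

lemma conj_nz: "0 \<notin> set (conjugate lam)"
proof
  assume "0 \<in> set (conjugate lam)"
  then obtain k where k: "k < mx lam" "C lam k = 0" unfolding conj_alt by auto
  then obtain x where "x \<in> set lam" "k < x" using mx_ex by blast
  hence "0 < C lam k" unfolding C_def cntge_def by (metis Suc_leI filter_empty_conv length_greater_0_conv)
  thus False using k by simp
qed

lemma sum_map_upt_ind: "x \<le> m \<Longrightarrow> (\<Sum>j\<leftarrow>[0..<m]. if Suc j \<le> x then 1 else 0) = (x::nat)"
proof -
  assume "x \<le> m"
  have "(\<Sum>j\<leftarrow>[0..<m]. if Suc j \<le> x then 1 else 0) = (\<Sum>j\<in>{0..<m}. if j < x then 1 else (0::nat))"
    by (simp add: sum_list_distinct_conv_sum_set Suc_le_eq)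
  also have "\<dots> = card ({0..<m} \<inter> {j. j < x})" by (simp add: sum.If_cases)
  also have "{0..<m} \<inter> {j. j < x} = {0..<x}" using \<open>x \<le> m\<close> by auto
  finally show ?thesis by simp
qed

lemma sum_conj_aux: "\<forall>x\<in>set xs. x \<le> m \<Longrightarrow> sum_list (map (C xs) [0..<m]) = sum_list xs"
proof (induction xs)
  case Nil thus ?case by (simp add: C_def)
next
  case (Cons x xs)
  have eq: "map (C (x#xs)) [0..<m] = map (\<lambda>j. (if Suc j \<le> x then 1 else 0) + C xs j) [0..<m]"
    by (auto simp: C_def)
  have "sum_list (map (C (x#xs)) [0..<m]) = (\<Sum>j\<leftarrow>[0..<m]. if Suc j \<le> x then 1 else 0) + sum_list (map (C xs) [0..<m])"
    unfolding eq by (simp add: sum_list_addf)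
  also have "\<dots> = x + sum_list xs" using Cons sum_map_upt_ind by simp
  finally show ?case by simp
qed

lemma sum_conj: "sum_list (conjugate lam) = sum_list lam"
  unfolding conj_alt by (rule sum_conj_aux) (auto intro: mx_ge)

lemma Dg_conj: "Dg (conjugate lam) = prod.swap ` Dg lam"
proof -
  have "(i,k) \<in> Dg (conjugate lam) \<longleftrightarrow> (k,i) \<in> Dg lam" for i k
  proof -
    have "(i,k) \<in> Dg (conjugate lam) \<longleftrightarrow> i < mx lam \<and> Suc k \<le> C lam i"
      unfolding Dg_def using key[OF conj_sorted, of i lam "Suc k"] by (auto simp add: C_def conj_alt)
    also have "\<dots> \<longleftrightarrow> k < C lam i" using C_pos_mx by fastforce
    finally show ?thesis by (simp add: Dg_def)
  qed
  thus ?thesis by (auto simp: image_iff) (metis swap_simp)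
qed

lemma C_eq_of_Dg: "Dg xs = Dg ys \<Longrightarrow> C xs k = C ys k"
proof -
  assume "Dg xs = Dg ys"
  hence "\<forall>i. i < C xs k \<longleftrightarrow> i < C ys k" unfolding Dg_def by (metis (no_types, lifting) case_prodI mem_Collect_eq case_prodD)
  thus ?thesis by (metis less_irrefl nat_neq_iff)
qed

definition part :: "nat list \<Rightarrow> bool" where "part xs \<longleftrightarrow> sorted_wrt (\<ge>) xs \<and> 0 \<notin> set xs"

lemma part_eq: "part xs \<Longrightarrow> part ys \<Longrightarrow> (\<And>k. C xs k = C ys k) \<Longrightarrow> xs = ys"
proof -
  assume px: "part xs" and py: "part ys" and c: "\<And>k. C xs k = C ys k"
  have kx: "\<And>i t. i < cntge xs t \<longleftrightarrow> i < length xs \<and> t \<le> xs!i" using key px part_def by blast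
  have ky: "\<And>i t. i < cntge ys t \<longleftrightarrow> i < length ys \<and> t \<le> ys!i" using key py part_def by blast
  have lx: "cntge xs (Suc 0) = length xs" using px unfolding part_def cntge_def
    by (metis Suc_leI filter_True neq0_conv)
  have ly: "cntge ys (Suc 0) = length ys" using py unfolding part_def cntge_def
    by (metis Suc_leI filter_True neq0_conv)
  have len: "length xs = length ys" using c[of 0] lx ly by (simp add: C_def)
  show ?thesis
  proof (rule nth_equalityI[OF len])
    fix i assume i: "i < length xs"
    have "\<forall>k. k < xs!i \<longleftrightarrow> k < ys!i"
    proof
      fix k
      have "k < xs!i \<longleftrightarrow> i < cntge xs (Suc k)" using kx i len by auto
      also have "\<dots> \<longleftrightarrow> i < cntge ys (Suc k)" using c[of k] by (simp add: C_def)
      also have "\<dots> \<longleftrightarrow> k < ys!i" using ky i len by auto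
      finally show "k < xs!i \<longleftrightarrow> k < ys!i" .
    qed
    thus "xs!i = ys!i" by (metis less_irrefl nat_neq_iff)
  qed
qed

lemma part_conj: "part (conjugate lam)"
  using conj_sorted conj_nz part_def by blast

lemma conj_conj: "part lam \<Longrightarrow> conjugate (conjugate lam) = lam"
  apply (rule part_eq[OF part_conj], assumption)
  apply (rule C_eq_of_Dg)
  apply (simp add: Dg_conj image_image)
  done

lemma part_normalize: "part (normalize xs)"
  unfolding part_def normalize_def by (auto simp: sorted_wrt_rev)

lemma C_normalize: "C (normalize xs) k = C xs k"
proof -
  have "mset (normalize xs) = mset (filter (\<lambda>x. x \<noteq> 0) xs)" unfolding normalize_def by simp
  hence "length (filter (\<lambda>x. Suc k \<le> x) (normalize xs)) = length (filter (\<lambda>x. Suc k \<le> x) (filter (\<lambda>x. x \<noteq> 0) xs))"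
    by (metis mset_filter size_mset)
  also have "filter (\<lambda>x. Suc k \<le> x) (filter (\<lambda>x. x \<noteq> 0) xs) = filter (\<lambda>x. Suc k \<le> x) xs"
    by (induction xs) auto
  finally show ?thesis by (simp add: C_def cntge_def)
qed

lemma Partitions_part: "lam \<in> Partitions n \<longleftrightarrow> part lam \<and> sum_list lam = n"
  unfolding Partitions_def is_partition_def part_def by auto

lemma conj_Partitions: "lam \<in> Partitions n \<Longrightarrow> conjugate lam \<in> Partitions n"
  using Partitions_part part_conj sum_conj by metis

definition xch :: "nat list \<Rightarrow> nat list \<Rightarrow> bool" where
  "xch mu nu \<longleftrightarrow> (\<exists>a b. a \<noteq> b \<and> 0 < C mu a \<and>
     (\<forall>k. C nu k = (if k = a then C mu k - 1 else if k = b then C mu k + 1 else C mu k)))"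

definition sx :: "nat list \<Rightarrow> nat list \<Rightarrow> bool" where
  "sx mu nu \<longleftrightarrow> (\<exists>p q. p \<in> Dg mu \<and> q \<notin> Dg mu \<and> Dg nu = insert q (Dg mu - {p}))"

lemma xch_sx: "xch mu nu \<Longrightarrow> sx mu nu"
proof -
  assume "xch mu nu"
  then obtain a b where ab: "a \<noteq> b" "0 < C mu a"
    and c: "\<And>k. C nu k = (if k = a then C mu k - 1 else if k = b then C mu k + 1 else C mu k)"
    unfolding xch_def by blast
  have "Dg nu = insert (C mu b, b) (Dg mu - {(C mu a - 1, a)})"
  proof (rule set_eqI)
    fix z :: "nat \<times> nat"
    obtain i k where z: "z = (i,k)" by fastforce
    show "z \<in> Dg nu \<longleftrightarrow> z \<in> insert (C mu b, b) (Dg mu - {(C mu a - 1, a)})"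
      unfolding z Dg_def using ab c[of k] by auto
  qed
  moreover have "(C mu a - 1, a) \<in> Dg mu" "(C mu b, b) \<notin> Dg mu" using ab by (auto simp: Dg_def)
  ultimately show ?thesis unfolding sx_def by blast
qed

lemma sx_xch: "sx mu nu \<Longrightarrow> xch mu nu"
proof -
  assume "sx mu nu"
  then obtain r c r' c' where p: "(r,c) \<in> Dg mu" and q: "(r',c') \<notin> Dg mu"
    and e: "Dg nu = insert (r',c') (Dg mu - {(r,c)})" unfolding sx_def by fastforce
  have col: "i < C nu k \<longleftrightarrow> (i = r' \<and> k = c') \<or> (i < C mu k \<and> \<not> (i = r \<and> k = c))" for i k
  proof -
    have "(i,k) \<in> Dg nu \<longleftrightarrow> (i,k) \<in> insert (r',c') (Dg mu - {(r,c)})" using e by simp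
    thus ?thesis unfolding Dg_def by simp
  qed
  have rc: "r < C mu c" using p by (simp add: Dg_def)
  have rc': "C mu c' \<le> r'" using q by (simp add: Dg_def)
  have ne: "c \<noteq> c'"
  proof
    assume cc: "c = c'"
    have "r' < C nu c" using col[of r' c] cc by simp
    moreover have "r \<noteq> r'" using rc rc' cc by simp
    hence "\<not> r < C nu c" using col[of r c] cc by simp
    moreover have "C mu c \<le> r'" using rc' cc by simp
    ultimately show False using rc by linarith
  qed
  have ca: "C nu c = C mu c - 1"
  proof -
    have h: "i < C nu c \<longleftrightarrow> i < C mu c \<and> i \<noteq> r" for i using col[of i c] ne by simp
    have "r = C mu c - 1"
    proof (rule ccontr)
      assume "r \<noteq> C mu c - 1"
      hence "Suc r < C mu c" using rc by linarith
      hence "Suc r < C nu c" using h[of "Suc r"] by simp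
      hence "r < C nu c" by simp
      thus False using h[of r] by simp
    qed
    hence h2: "i < C nu c \<longleftrightarrow> i < C mu c - 1" for i using h[of i] rc by auto
    show ?thesis using h2[of "C nu c"] h2[of "C mu c - 1"] by linarith
  qed
  have cb: "C nu c' = C mu c' + 1"
  proof -
    have h: "i < C nu c' \<longleftrightarrow> i = r' \<or> i < C mu c'" for i using col[of i c'] ne by auto
    have "r' = C mu c'"
    proof (rule ccontr)
      assume "r' \<noteq> C mu c'"
      hence "C mu c' < r'" using rc' by linarith
      moreover have "r' < C nu c'" using h[of r'] by simp
      ultimately have "C mu c' < C nu c'" by linarith
      thus False using h[of "C mu c'"] \<open>r' \<noteq> C mu c'\<close> by simp
    qed
    hence h2: "i < C nu c' \<longleftrightarrow> i < C mu c' + 1" for i using h[of i] by auto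
    show ?thesis using h2[of "C nu c'"] h2[of "C mu c' + 1"] by linarith
  qed
  have co: "C nu k = C mu k" if "k \<noteq> c" "k \<noteq> c'" for k
  proof -
    have h: "i < C nu k \<longleftrightarrow> i < C mu k" for i using col[of i k] that by simp
    show ?thesis using h[of "C nu k"] h[of "C mu k"] by linarith
  qed
  have "\<forall>k. C nu k = (if k = c then C mu k - 1 else if k = c' then C mu k + 1 else C mu k)"
    using ca cb co by simp
  thus ?thesis unfolding xch_def using ne rc by (intro exI[of _ c] exI[of _ c']) simp
qed

lemma sx_conj: "sx mu nu \<Longrightarrow> sx (conjugate mu) (conjugate nu)"
proof -
  assume "sx mu nu"
  then obtain p q where p: "p \<in> Dg mu" "q \<notin> Dg mu" "Dg nu = insert q (Dg mu - {p})"
    unfolding sx_def by blast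
  have i: "inj prod.swap" by (simp add: inj_on_def)
  have "Dg (conjugate nu) = insert (prod.swap q) (Dg (conjugate mu) - {prod.swap p})"
    unfolding Dg_conj p(3) by (simp add: image_set_diff[OF i])
  moreover have "prod.swap p \<in> Dg (conjugate mu)" "prod.swap q \<notin> Dg (conjugate mu)"
    unfolding Dg_conj using p i by (auto simp: inj_image_mem_iff)
  ultimately show ?thesis unfolding sx_def by blast
qed

lemma exists_idx: "i < length xs \<Longrightarrow> (if xs!i = v then 1 else 0) < length (filter (\<lambda>x. x = v) xs)
   \<Longrightarrow> \<exists>j<length xs. j \<noteq> i \<and> xs!j = v"
proof (rule ccontr)
  assume i: "i < length xs" and l: "(if xs!i = v then 1 else 0) < length (filter (\<lambda>x. x = v) xs)"
    and n: "\<not> (\<exists>j<length xs. j \<noteq> i \<and> xs!j = v)"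
  have "{j. j < length xs \<and> xs!j = v} = (if xs!i = v then {i} else {})" using n i by auto
  hence "length (filter (\<lambda>x. x = v) xs) = (if xs!i = v then 1 else 0)"
    by (simp add: length_filter_conv_card)
  thus False using l by simp
qed

lemma um_xch: "part mu \<Longrightarrow> unit_move mu nu \<Longrightarrow> xch mu nu"
proof -
  assume pm: "part mu" and um: "unit_move mu nu"
  have kx: "\<And>i t. i < cntge mu t \<longleftrightarrow> i < length mu \<and> t \<le> mu!i" using key pm part_def by blast
  have ne: "nu \<noteq> mu" using um unfolding unit_move_def by blast
  show ?thesis
  proof (cases "\<exists>i j. i < length mu \<and> j < length mu \<and> i \<noteq> j \<and> 1 \<le> mu ! i \<and>
              nu = normalize ((mu[i := mu ! i - 1])[j := mu ! j + 1])")
    case True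
    then obtain i j where ij: "i < length mu" "j < length mu" "i \<noteq> j" "1 \<le> mu ! i"
      and nu: "nu = normalize ((mu[i := mu ! i - 1])[j := mu ! j + 1])" by blast
    define ys where "ys = (mu[i := mu ! i - 1])[j := mu ! j + 1]"
    define a where "a = mu!i - 1"
    define b where "b = mu!j"
    have u1: "\<And>t. cntge (mu[i := mu!i - 1]) t + (if t \<le> mu!i then 1 else 0) = cntge mu t + (if t \<le> mu!i - 1 then 1 else 0)"
      using cntge_update ij by blast
    have u2: "\<And>t. cntge ys t + (if t \<le> mu!j then 1 else 0) = cntge (mu[i := mu!i - 1]) t + (if t \<le> mu!j + 1 then 1 else 0)"
      using cntge_update[of j "mu[i := mu!i - 1]"] ij unfolding ys_def by simp
    have f: "C ys k = C mu k - (if k = a then 1 else 0) + (if k = b then 1 else 0)" for k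
      using u1[of "Suc k"] u2[of "Suc k"] ij unfolding C_def a_def b_def
      by (cases "k = mu!i - 1"; cases "k = mu!j"; simp split: if_splits)
    have Cnu: "C nu k = C ys k" for k using nu C_normalize ys_def by simp
    have pos: "0 < C mu a" using kx[of i "Suc a"] ij unfolding C_def a_def by simp
    have ab: "a \<noteq> b"
    proof
      assume "a = b"
      hence "C nu k = C mu k" for k using f Cnu pos by auto
      hence "nu = mu" using part_eq[OF _ pm] nu part_normalize by blast
      thus False using ne by simp
    qed
    show ?thesis unfolding xch_def using ab pos f Cnu by (intro exI[of _ a] exI[of _ b]) auto
  next
    case False
    then obtain i where ij: "i < length mu" "1 \<le> mu ! i"
      and nu: "nu = normalize (mu[i := mu ! i - 1] @ [1])" using um unfolding unit_move_def by blast
    define ys where "ys = mu[i := mu ! i - 1] @ [1]"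
    define a where "a = mu!i - 1"
    have u1: "\<And>t. cntge (mu[i := mu!i - 1]) t + (if t \<le> mu!i then 1 else 0) = cntge mu t + (if t \<le> mu!i - 1 then 1 else 0)"
      using cntge_update ij by blast
    have f: "C ys k = C mu k - (if k = a then 1 else 0) + (if k = 0 then 1 else 0)" for k
      using u1[of "Suc k"] ij unfolding C_def a_def ys_def
      by (cases "k = mu!i - 1"; cases "k = 0"; simp split: if_splits)
    have Cnu: "C nu k = C ys k" for k using nu C_normalize ys_def by simp
    have pos: "0 < C mu a" using kx[of i "Suc a"] ij unfolding C_def a_def by simp
    have ab: "a \<noteq> 0"
    proof
      assume "a = 0"
      hence "C nu k = C mu k" for k using f Cnu pos by auto
      hence "nu = mu" using part_eq[OF _ pm] nu part_normalize by blast
      thus False using ne by simp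
    qed
    show ?thesis unfolding xch_def using ab pos f Cnu by (intro exI[of _ a] exI[of _ 0]) auto
  qed
qed

lemma e1_aux:
  fixes X Y :: "nat \<Rightarrow> nat"
  assumes u1: "\<And>t. X t + (if t \<le> m then 1 else 0) = Y t + (if t \<le> m - 1 then 1 else 0)"
   and i: "m = Suc a"
  shows "X (Suc k) = (if k = a then Y (Suc k) - 1 else Y (Suc k))"
  using u1[of "Suc k"] i by (cases "k < a"; cases "k = a"; simp)

lemma e2_aux:
  fixes X Y :: "nat \<Rightarrow> nat"
  assumes u1: "\<And>t. X t + (if t \<le> m then 1 else 0) = Y t + (if t \<le> m + 1 then 1 else 0)"
  shows "X (Suc k) = (if k = m then Y (Suc k) + 1 else Y (Suc k))"
  using u1[of "Suc k"] by (cases "k < m"; cases "k = m"; simp)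

lemma fy0_aux:
  fixes X Y Z :: "nat \<Rightarrow> nat"
  assumes e1: "X (Suc k) = (if k = a then Y (Suc k) - 1 else Y (Suc k))"
   and f: "Z (Suc k) = (if k = a then Y (Suc k) - 1 else if k = 0 then Y (Suc k) + 1 else Y (Suc k))"
   and "a \<noteq> 0"
  shows "X (Suc k) + (if Suc k \<le> 1 then 1 else 0) = Z (Suc k)"
  using assms by (cases "k = a"; cases "k = 0"; simp)

lemma fy1_aux:
  fixes X Y Z W :: "nat \<Rightarrow> nat"
  assumes e1: "X (Suc k) = (if k = a then Y (Suc k) - 1 else Y (Suc k))"
   and e2: "W (Suc k) = (if k = b then X (Suc k) + 1 else X (Suc k))"
   and f: "Z (Suc k) = (if k = a then Y (Suc k) - 1 else if k = b then Y (Suc k) + 1 else Y (Suc k))"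
   and "a \<noteq> b"
  shows "W (Suc k) = Z (Suc k)"
  using assms by (cases "k = a"; cases "k = b"; simp)

lemma xch_um: "part mu \<Longrightarrow> part nu \<Longrightarrow> xch mu nu \<Longrightarrow> unit_move mu nu"
proof -
  assume pm: "part mu" and pn: "part nu" and "xch mu nu"
  then obtain a b where ab: "a \<noteq> b" and pos: "0 < C mu a"
    and f: "\<And>k. C nu k = (if k = a then C mu k - 1 else if k = b then C mu k + 1 else C mu k)"
    unfolding xch_def by blast
  have ne: "nu \<noteq> mu" using f[of a] pos by auto
  have "C mu (Suc a) \<le> C nu (Suc a)" using f[of "Suc a"] by auto
  also have "\<dots> \<le> C nu a" unfolding C_def by (rule cntge_anti) simp
  also have "\<dots> < C mu a" using f[of a] pos by simp
  finally have "0 < length (filter (\<lambda>x. x = Suc a) mu)" using cntge_split[of mu "Suc a"] unfolding C_def by simp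
  then obtain i where i: "i < length mu" "mu!i = Suc a"
    by (metis (mono_tags, lifting) filter_empty_conv in_set_conv_nth length_greater_0_conv)
  have u1: "\<And>t. cntge (mu[i := mu!i - 1]) t + (if t \<le> mu!i then 1 else 0) = cntge mu t + (if t \<le> mu!i - 1 then 1 else 0)"
    using cntge_update i by blast
  have e1: "cntge (mu[i := mu!i - 1]) (Suc k) = (if k = a then cntge mu (Suc k) - 1 else cntge mu (Suc k))" for k
    by (rule e1_aux[OF u1 i(2)])
  show ?thesis
  proof (cases b)
    case 0
    define ys where "ys = mu[i := mu ! i - 1] @ [1]"
    have fy: "C ys k = C nu k" for k
    proof -
      have f': "cntge nu (Suc k) = (if k = a then cntge mu (Suc k) - 1 else if k = 0 then cntge mu (Suc k) + 1 else cntge mu (Suc k))"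
        using f[of k] 0 by (simp add: C_def)
      have "C ys k = cntge (mu[i := mu!i - 1]) (Suc k) + (if Suc k \<le> 1 then 1 else 0)"
        unfolding C_def ys_def by simp
      also have "\<dots> = cntge nu (Suc k)"
        by (rule fy0_aux[where X="cntge (mu[i := mu!i - 1])" and Y="cntge mu" and Z="cntge nu", OF e1[of k] f']) (use ab 0 in simp)
      finally show ?thesis by (simp add: C_def)
    qed
    have "nu = normalize ys"
      by (rule part_eq[OF pn part_normalize]) (simp add: C_normalize fy)
    hence "\<exists>i. i < length mu \<and> 1 \<le> mu ! i \<and> nu = normalize (mu[i := mu ! i - 1] @ [1])"
      using i unfolding ys_def by (intro exI[of _ i]) simp
    thus ?thesis unfolding unit_move_def using ne by blast
  next
    case (Suc b')
    have "C mu b + 1 \<le> C nu b'" using f[of b] ab cntge_anti[of "Suc b'" "Suc (Suc b')" nu] unfolding C_def Suc by simp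
    moreover have "C nu b' = (if b' = a then C mu b' - 1 else C mu b')" using f[of b'] Suc by simp
    ultimately have h: "C mu b + 1 + (if b' = a then 1 else 0) \<le> C mu b'" by (cases "b' = a") simp_all
    have sp: "C mu b' = length (filter (\<lambda>x. x = Suc b') mu) + C mu b"
      using cntge_split[of mu "Suc b'"] unfolding C_def Suc .
    have ii: "(if mu!i = Suc b' then 1 else 0) = (if b' = a then 1 else (0::nat))" using i(2) by simp
    have "(if mu!i = Suc b' then 1 else 0) < length (filter (\<lambda>x. x = Suc b') mu)"
      unfolding ii using h sp by linarith
    hence "\<exists>j<length mu. j \<noteq> i \<and> mu!j = Suc b'" by (rule exists_idx[OF i(1)])
    then obtain j where j: "j < length mu" "j \<noteq> i" "mu!j = Suc b'" by blast
    define ys where "ys = (mu[i := mu ! i - 1])[j := mu ! j + 1]"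
    have u2: "\<And>t. cntge ys t + (if t \<le> mu!j then 1 else 0) = cntge (mu[i := mu!i - 1]) t + (if t \<le> mu!j + 1 then 1 else 0)"
      using cntge_update[of j "mu[i := mu!i - 1]"] i j unfolding ys_def by simp
    have fy: "C ys k = C nu k" for k
    proof -
      have e2: "cntge ys (Suc k) = (if k = Suc b' then cntge (mu[i := mu!i - 1]) (Suc k) + 1 else cntge (mu[i := mu!i - 1]) (Suc k))"
        using e2_aux[OF u2] j(3) by simp
      have f': "cntge nu (Suc k) = (if k = a then cntge mu (Suc k) - 1 else if k = Suc b' then cntge mu (Suc k) + 1 else cntge mu (Suc k))"
        using f[of k] Suc by (simp add: C_def)
      have "cntge ys (Suc k) = cntge nu (Suc k)"
        by (rule fy1_aux[where X="cntge (mu[i := mu!i - 1])" and Y="cntge mu" and Z="cntge nu" and W="cntge ys", OF e1[of k] e2 f']) (use ab Suc in simp)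
      thus ?thesis by (simp add: C_def)
    qed
    have "nu = normalize ys"
      by (rule part_eq[OF pn part_normalize]) (simp add: C_normalize fy)
    hence "\<exists>i j. i < length mu \<and> j < length mu \<and> i \<noteq> j \<and> 1 \<le> mu ! i \<and>
              nu = normalize ((mu[i := mu ! i - 1])[j := mu ! j + 1])"
      using i j unfolding ys_def by (intro exI[of _ i] exI[of _ j]) simp
    thus ?thesis unfolding unit_move_def using ne by blast
  qed
qed

lemma mx_eq: "x \<in> set xs \<Longrightarrow> \<forall>y\<in>set xs. y \<le> x \<Longrightarrow> mx xs = x"
  using mx_ge mx_ex by (metis antisym leD not_le_imp_less)

lemma C_rep: "C (replicate b a) k = (if Suc k \<le> a then b else 0)"
  by (simp add: C_def cntge_def filter_replicate)

lemma conj_rep: "1 \<le> b \<Longrightarrow> conjugate (replicate b a) = replicate a b"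
proof -
  assume "1 \<le> b"
  hence "mx (replicate b a) = a" by (intro mx_eq) auto
  thus ?thesis unfolding conj_alt by (auto simp: C_rep intro: nth_equalityI)
qed

lemma conj_alpha: "2 \<le> a \<Longrightarrow> 2 \<le> b \<Longrightarrow> conjugate (alpha (replicate b a)) = beta (replicate a b)"
proof -
  assume a: "2 \<le> a" and b: "2 \<le> b"
  have al: "alpha (replicate b a) = [a+1] @ replicate (b-2) a @ [a-1]"
    using a b by (simp add: alpha_def)
  have be: "beta (replicate a b) = replicate (a-1) b @ [b-1, 1]"
    using a b by (simp add: beta_def)
  have m: "mx (alpha (replicate b a)) = a + 1" unfolding al by (intro mx_eq) auto
  have c: "C (alpha (replicate b a)) k = (if k < a + 1 then 1 else 0) + (if k < a then b - 2 else 0) + (if k < a - 1 then 1 else 0)" for k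
    unfolding al by (auto simp add: C_def cntge_def filter_replicate Suc_le_eq)
  show ?thesis unfolding conj_alt m be
  proof (rule nth_equalityI)
    show "length (map (C (alpha (replicate b a))) [0..<a + 1]) = length (replicate (a - 1) b @ [b - 1, 1])"
      using a by simp
    fix k assume "k < length (map (C (alpha (replicate b a))) [0..<a + 1])"
    hence k: "k < a + 1" by simp
    show "map (C (alpha (replicate b a))) [0..<a + 1] ! k = (replicate (a - 1) b @ [b - 1, 1]) ! k"
    proof -
      consider "k < a - 1" | "k = a - 1" | "k = a" using k by linarith
      thus ?thesis using a b c[of k] k by cases (auto simp: nth_append)
    qed
  qed
qed

lemma conj_beta: "2 \<le> a \<Longrightarrow> 2 \<le> b \<Longrightarrow> conjugate (beta (replicate b a)) = alpha (replicate a b)"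
proof -
  assume a: "2 \<le> a" and b: "2 \<le> b"
  have be: "beta (replicate b a) = replicate (b-1) a @ [a-1, 1]"
    using a b by (simp add: beta_def)
  have al: "alpha (replicate a b) = [b+1] @ replicate (a-2) b @ [b-1]"
    using a b by (simp add: alpha_def)
  have m: "mx (beta (replicate b a)) = a" unfolding be using a b by (intro mx_eq) auto
  have c: "C (beta (replicate b a)) k = (if k < a then b - 1 else 0) + (if k < a - 1 then 1 else 0) + (if k = 0 then 1 else 0)" for k
    unfolding be by (simp add: C_def cntge_def filter_replicate Suc_le_eq)
  show ?thesis unfolding conj_alt m al
  proof (rule nth_equalityI)
    show "length (map (C (beta (replicate b a))) [0..<a]) = length ([b+1] @ replicate (a-2) b @ [b-1])"
      using a by simp
    fix k assume "k < length (map (C (beta (replicate b a))) [0..<a])"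
    hence k: "k < a" by simp
    show "map (C (beta (replicate b a))) [0..<a] ! k = ([b+1] @ replicate (a-2) b @ [b-1]) ! k"
    proof -
      consider "k = 0" | "0 < k" "k < a - 1" | "k = a - 1" using k a by linarith
      thus ?thesis using a b c[of k] k by cases (auto simp: nth_append nth_Cons')
    qed
  qed
qed

lemma Rect_E: "rho \<in> Rect n \<Longrightarrow> (\<And>a b. rho = replicate b a \<Longrightarrow> a * b = n \<Longrightarrow> 2 \<le> a \<Longrightarrow> 2 \<le> b \<Longrightarrow> P) \<Longrightarrow> P"
  unfolding Rect_def by blast

lemma Rect_part: "rho \<in> Rect n \<Longrightarrow> rho \<in> Partitions n"
  by (erule Rect_E) (auto simp: Partitions_def is_partition_def sorted_wrt_iff_nth_less sum_list_replicate mult.commute)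

lemma Rect_conj: "rho \<in> Rect n \<Longrightarrow> conjugate rho \<in> Rect n"
  by (erule Rect_E) (auto simp: Rect_def conj_rep mult.commute)

lemma attach_conj: "rho \<in> Rect n \<Longrightarrow> attach (conjugate rho) = conjugate ` attach rho
   \<and> support_edge (conjugate rho) = map_uprod conjugate (support_edge rho)"
  by (erule Rect_E) (auto simp: attach_def support_edge_def conj_rep conj_alpha conj_beta)

lemma adj_conj: "adj n mu nu \<Longrightarrow> adj n (conjugate mu) (conjugate nu)"
proof -
  assume h: "adj n mu nu"
  hence pm: "mu \<in> Partitions n" and pn: "nu \<in> Partitions n" unfolding adj_def by auto
  have "unit_move (conjugate x) (conjugate y)" if "unit_move x y" "part x" for x y
    using xch_um[OF part_conj part_conj sx_xch[OF sx_conj[OF xch_sx[OF um_xch[OF that(2,1)]]]]] .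
  thus ?thesis using h pm pn conj_Partitions Partitions_part unfolding adj_def by metis
qed

lemma notRect_conj: "x \<in> Partitions n - Rect n \<Longrightarrow> conjugate x \<in> Partitions n - Rect n"
  using conj_Partitions Rect_conj conj_conj Partitions_part by (metis DiffD1 DiffD2 DiffI)

lemma walk_conj: "walk n p \<Longrightarrow> walk n (map conjugate p)"
  unfolding walk_def using notRect_conj adj_conj by auto

lemma walk_invol: assumes "walk n p" shows "map conjugate (map conjugate p) = p"
proof -
  have "part x" if "x \<in> set p" for x using assms that Partitions_part unfolding walk_def by blast
  hence "\<forall>x\<in>set p. conjugate (conjugate x) = x" using conj_conj by blast
  thus ?thesis by (induction p) auto
qed

lemma SW_fwd: "rho \<in> Rect n \<Longrightarrow> sigma \<in> Rect n \<Longrightarrow> p \<in> support_walks n rho sigma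
   \<Longrightarrow> map conjugate p \<in> support_walks n (conjugate rho) (conjugate sigma)"
  unfolding support_walks_def using walk_conj attach_conj
  by (auto simp: walk_def hd_map last_map)

lemma SW_conj: "rho \<in> Rect n \<Longrightarrow> sigma \<in> Rect n \<Longrightarrow>
  support_walks n (conjugate rho) (conjugate sigma) = map conjugate ` support_walks n rho sigma"
proof
  assume r: "rho \<in> Rect n" and s: "sigma \<in> Rect n"
  show "map conjugate ` support_walks n rho sigma \<subseteq> support_walks n (conjugate rho) (conjugate sigma)"
    using SW_fwd[OF r s] by blast
  show "support_walks n (conjugate rho) (conjugate sigma) \<subseteq> map conjugate ` support_walks n rho sigma"
  proof
    fix q assume q: "q \<in> support_walks n (conjugate rho) (conjugate sigma)"
    have "map conjugate q \<in> support_walks n (conjugate (conjugate rho)) (conjugate (conjugate sigma))"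
      using SW_fwd[OF Rect_conj[OF r] Rect_conj[OF s] q] .
    hence "map conjugate q \<in> support_walks n rho sigma"
      using conj_conj Rect_part Partitions_part r s by metis
    moreover have "q = map conjugate (map conjugate q)"
      using walk_invol q unfolding support_walks_def by auto
    ultimately show "q \<in> map conjugate ` support_walks n rho sigma" by blast
  qed
qed

lemma dsup_conj: "rho \<in> Rect n \<Longrightarrow> sigma \<in> Rect n \<Longrightarrow>
  d_sup n (conjugate rho) (conjugate sigma) = d_sup n rho sigma"
  unfolding d_sup_def SW_conj by (simp add: image_image)

lemma geo_conj: "rho \<in> Rect n \<Longrightarrow> sigma \<in> Rect n \<Longrightarrow>
  support_geodesics n (conjugate rho) (conjugate sigma) = map conjugate ` support_geodesics n rho sigma"
  unfolding support_geodesics_def dsup_conj SW_conj by auto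

lemma pe_alt: "path_edges p = (\<lambda>i. Upair (p!i) (p!Suc i)) ` {i. Suc i < length p}"
  unfolding path_edges_def by auto

lemma path_edges_map: "path_edges (map f p) = map_uprod f ` path_edges p"
proof -
  have "path_edges (map f p) = (\<lambda>i. Upair (f (p!i)) (f (p!Suc i))) ` {i. Suc i < length p}"
    unfolding pe_alt by (intro image_cong) auto
  thus ?thesis unfolding pe_alt by (simp add: image_image)
qed

theorem proposition4p10:
  assumes "rho \<in> Rect n" and "sigma \<in> Rect n"
  shows "attach (conjugate rho) = conjugate ` attach rho
       \<and> support_edge (conjugate rho) = map_uprod conjugate (support_edge rho)
       \<and> d_sup n rho sigma = d_sup n (conjugate rho) (conjugate sigma)
       \<and> bij_betw (map conjugate) (support_geodesics n rho sigma)
            (support_geodesics n (conjugate rho) (conjugate sigma))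
       \<and> Corr_all n (conjugate rho) (conjugate sigma) = conj_graph (Corr_all n rho sigma)"
proof -
  have inj: "inj_on (map conjugate) (support_geodesics n rho sigma)"
    by (rule inj_on_inverseI[where g="map conjugate"], rule walk_invol)
       (auto simp: support_geodesics_def support_walks_def)
  have bij: "bij_betw (map conjugate) (support_geodesics n rho sigma)
            (support_geodesics n (conjugate rho) (conjugate sigma))"
    unfolding bij_betw_def using inj geo_conj[OF assms] by simp
  have corr: "Corr_all n (conjugate rho) (conjugate sigma) = conj_graph (Corr_all n rho sigma)"
    unfolding Corr_all_def conj_graph_def geo_conj[OF assms]
    by (simp add: image_UN path_edges_map)
  show ?thesis using attach_conj[OF assms(1)] dsup_conj[OF assms] bij corr by simp
qed

end
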